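(* Let $1\le k\le n$, $p=c_n^k$, and let $X$ be a real symmetric $n\times n$ matrix with diagonalization $X=Q\Lambda Q^{\intercal}$ ($Q$ orthogonal, $\Lambda$ diagonal). Then for each $i\in[n]$, $$p|_{\{i\}}(X)=X_{ii}\,c_n^{k-1}(\Lambda)-X_i^{\intercal}Q\,\nabla c_n^{k-1}(\Lambda)\,Q^{\intercal}X_i,$$ where $X_i$ is the $i$-th column of $X$.
   Context: $c_n^j(X)=\sum_{S\subseteq[n],|S|=j}\det(X|_S)$ with $X|_S$ the principal submatrix indexed by $S$; $p|_{\{i\}}(X)=\sum_{|S|=k,\,i\in S}\det(X|_S)$. For $f$ a function of an $n\times n$ matrix, $\nabla f$ is the matrix $G$ with $G_{ij}=\frac{\partial f}{\partial X_{ij}}$. *)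

theory Defs
  imports "HOL-Analysis.Analysis"
begin

text \<open>Determinant of the principal submatrix X|_S, written out via the Leibniz
formula (exactly as the library's det unfolds, restricted to the index set S).\<close>
definition principal_minor :: "real^'n^'n \<Rightarrow> 'n set \<Rightarrow> real" where
  "principal_minor X S =
     (\<Sum>p\<in>{p. p permutes S}. of_int (sign p) * (\<Prod>i\<in>S. X $ i $ p i))"

text \<open>c_n^j(X) = sum of the j x j principal minors.\<close>
definition esym_minor :: "nat \<Rightarrow> real^'n^'n \<Rightarrow> real" where
  "esym_minor j X = (\<Sum>S\<in>{S::'n set. card S = j}. principal_minor X S)"

text \<open>p|_{i}(X) for p = c_n^k: sum of k x k principal minors whose index set contains i.\<close>
definition restr_esym_minor :: "nat \<Rightarrow> 'n \<Rightarrow> real^'n^'n \<Rightarrow> real" where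
  "restr_esym_minor k i X = (\<Sum>S\<in>{S::'n set. card S = k \<and> i \<in> S}. principal_minor X S)"

definition ematrix :: "'n \<Rightarrow> 'n \<Rightarrow> real^'n^'n" where
  "ematrix a b = (\<chi> r c. if r = a \<and> c = b then 1 else 0)"

definition mat_grad :: "(real^'n^'n \<Rightarrow> real) \<Rightarrow> real^'n^'n \<Rightarrow> real^'n^'n" where
  "mat_grad f X = (\<chi> a b. deriv (\<lambda>t. f (X + t *\<^sub>R ematrix a b)) 0)"

end

theory Submission
  imports Defs
begin

lemma sign_sum_zero:
  assumes "finite S" "a \<in> S" "b \<in> S" "a \<noteq> b"
  shows "(\<Sum>p\<in>{p. p permutes S}. (of_int (sign p)::real)) = 0"
proof -
  have q: "Transposition.transpose a b permutes S" using assms by (simp add: permutes_swap_id)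
  have "(\<Sum>p\<in>{p. p permutes S}. (of_int (sign p)::real)) =
        (\<Sum>p\<in>{p. p permutes S}. of_int (sign (Transposition.transpose a b \<circ> p)))"
    by (rule setum_permutations_compose_left[OF q])
  also have "\<dots> = (\<Sum>p\<in>{p. p permutes S}. - of_int (sign p))"
  proof (rule sum.cong[OF refl])
    fix p assume "p \<in> {p. p permutes S}"
    then have "permutation p" using assms(1) permutation_permutes by blast
    then show "(of_int (sign (Transposition.transpose a b \<circ> p))::real) = - of_int (sign p)"
      using assms(4) by (simp add: sign_compose permutation_swap_id sign_swap_id)
  qed
  finally show ?thesis by (simp add: sum_negf)
qed

lemma pm_rank_one:
  fixes u v :: "'n::finite \<Rightarrow> real"
  shows "principal_minor (\<chi> a b. u a * v b) S =
    (\<Prod>a\<in>S. u a) * (\<Prod>a\<in>S. v a) * (\<Sum>p\<in>{p. p permutes S}. of_int (sign p))"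
proof -
  have "principal_minor (\<chi> a b. u a * v b) S =
     (\<Sum>p\<in>{p. p permutes S}. of_int (sign p) * ((\<Prod>a\<in>S. u a) * (\<Prod>a\<in>S. v a)))"
    unfolding principal_minor_def
  proof (rule sum.cong[OF refl])
    fix p assume "p \<in> {p. p permutes S}"
    then have pS: "p permutes S" by simp
    have "(\<Prod>a\<in>S. v (p a)) = (\<Prod>a\<in>S. v a)"
      using prod.permute[OF pS, of v] by (simp add: o_def)
    then show "of_int (sign p) * (\<Prod>i\<in>S. (\<chi> a b. u a * v b) $ i $ p i) =
        of_int (sign p) * ((\<Prod>a\<in>S. u a) * (\<Prod>a\<in>S. v a))"
      by (simp add: prod.distrib)
  qed
  then show ?thesis by (simp add: sum_distrib_right[symmetric] mult.commute)
qed

lemma pm_id_only: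
  assumes "\<And>p. p permutes S \<Longrightarrow> p \<noteq> id \<Longrightarrow> (\<Prod>c\<in>S. M $ c $ p c) = 0"
  shows "principal_minor M S = (\<Prod>c\<in>S. M $ c $ c)"
proof -
  have fin: "finite {p. p permutes S}" by (rule finite_permutations) simp
  have "principal_minor M S = of_int (sign (id::'a\<Rightarrow>'a)) * (\<Prod>c\<in>S. M $ c $ id c)"
    unfolding principal_minor_def
    apply (subst sum.remove[OF fin, of id])
     apply (simp add: permutes_id)
    apply (subst sum.neutral)
    using assms by auto
  then show ?thesis by simp
qed

lemma pm_diag:
  assumes "\<forall>a b. a \<noteq> b \<longrightarrow> M $ a $ b = 0"
  shows "principal_minor M S = (\<Prod>c\<in>S. M $ c $ c)"
proof (rule pm_id_only)
  fix p assume p: "p permutes S" "p \<noteq> id"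
  then obtain c where c: "p c \<noteq> c" by (auto simp: fun_eq_iff)
  then have "c \<in> S" using p(1) permutes_not_in by metis
  then show "(\<Prod>c\<in>S. M $ c $ p c) = 0"
    using c assms by (intro prod_zero) (auto intro!: bexI[of _ c])
qed

lemma det_diag_plus:
  fixes s :: "'n::finite \<Rightarrow> real" and Y :: "real^'n^'n"
  shows "det (\<chi> a b. (if a = b then s a else 0) + Y $ a $ b) =
    (\<Sum>S\<in>Pow UNIV. (\<Prod>a\<in>UNIV - S. s a) * principal_minor Y S)"
proof -
  let ?D = "\<lambda>a b. if a = b then s a else 0"
  let ?P = "{p. p permutes (UNIV::'n set)}"
  have finP: "finite ?P" by (rule finite_permutations) simp
  have "det (\<chi> a b. ?D a b + Y $ a $ b) =
    (\<Sum>p\<in>?P. of_int (sign p) * (\<Sum>S\<in>Pow UNIV. (\<Prod>a\<in>S. Y $ a $ p a) * (\<Prod>a\<in>UNIV - S. ?D a (p a))))"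
  proof -
    have "\<And>p. (\<Prod>i\<in>UNIV. ?D i (p i) + Y $ i $ p i) = (\<Prod>i\<in>UNIV. Y $ i $ p i + ?D i (p i))"
      by (simp add: add.commute)
    then show ?thesis unfolding det_def by (simp only: vec_lambda_beta prod_add[OF finite])
  qed
  also have "\<dots> = (\<Sum>S\<in>Pow UNIV. \<Sum>p\<in>?P. of_int (sign p) * (\<Prod>a\<in>S. Y $ a $ p a) * (\<Prod>a\<in>UNIV - S. ?D a (p a)))"
    by (subst sum.swap) (simp add: sum_distrib_left mult.assoc)
  also have "\<dots> = (\<Sum>S\<in>Pow UNIV. (\<Prod>a\<in>UNIV - S. s a) * principal_minor Y S)"
  proof (rule sum.cong[OF refl])
    fix S :: "'n set"
    have sub: "{p. p permutes S} \<subseteq> ?P" using permutes_subset by blast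
    have "(\<Sum>p\<in>?P. of_int (sign p) * (\<Prod>a\<in>S. Y $ a $ p a) * (\<Prod>a\<in>UNIV - S. ?D a (p a)))
       = (\<Sum>p\<in>{p. p permutes S}. of_int (sign p) * (\<Prod>a\<in>S. Y $ a $ p a) * (\<Prod>a\<in>UNIV - S. ?D a (p a)))"
    proof (rule sum.mono_neutral_right[OF finP sub])
      show "\<forall>p\<in>?P - {p. p permutes S}. of_int (sign p) * (\<Prod>a\<in>S. Y $ a $ p a) * (\<Prod>a\<in>UNIV - S. ?D a (p a)) = 0"
      proof
        fix p assume p: "p \<in> ?P - {p. p permutes S}"
        then have "\<exists>a. a \<notin> S \<and> p a \<noteq> a"
          by (auto simp: permutes_def)
        then obtain a where "a \<notin> S" "p a \<noteq> a" by blast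
        then have "(\<Prod>a\<in>UNIV - S. ?D a (p a)) = 0"
          by (intro prod_zero) (auto intro!: bexI[of _ a])
        then show "of_int (sign p) * (\<Prod>a\<in>S. Y $ a $ p a) * (\<Prod>a\<in>UNIV - S. ?D a (p a)) = 0" by simp
      qed
    qed
    also have "\<dots> = (\<Sum>p\<in>{p. p permutes S}. (\<Prod>a\<in>UNIV - S. s a) * (of_int (sign p) * (\<Prod>a\<in>S. Y $ a $ p a)))"
    proof (rule sum.cong[OF refl])
      fix p assume "p \<in> {p. p permutes S}"
      then have "(\<Prod>a\<in>UNIV - S. ?D a (p a)) = (\<Prod>a\<in>UNIV - S. s a)"
        by (intro prod.cong) (auto simp: permutes_not_in)
      then show "of_int (sign p) * (\<Prod>a\<in>S. Y $ a $ p a) * (\<Prod>a\<in>UNIV - S. ?D a (p a)) =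
         (\<Prod>a\<in>UNIV - S. s a) * (of_int (sign p) * (\<Prod>a\<in>S. Y $ a $ p a))" by simp
    qed
    also have "\<dots> = (\<Prod>a\<in>UNIV - S. s a) * principal_minor Y S"
      unfolding principal_minor_def by (simp add: sum_distrib_left)
    finally show "(\<Sum>p\<in>?P. of_int (sign p) * (\<Prod>a\<in>S. Y $ a $ p a) * (\<Prod>a\<in>UNIV - S. ?D a (p a)))
       = (\<Prod>a\<in>UNIV - S. s a) * principal_minor Y S" .
  qed
  finally show ?thesis .
qed


lemma pm_empty: "principal_minor M {} = 1"
  unfolding principal_minor_def by simp

lemma pm_single: "principal_minor M {a} = M $ a $ a"
  unfolding principal_minor_def by simp

lemma card_ge2_ex:
  assumes "finite S" "2 \<le> card S"
  shows "\<exists>a b. a \<in> S \<and> b \<in> S \<and> a \<noteq> b"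
proof (rule ccontr)
  assume "\<not> ?thesis"
  then have "\<forall>a\<in>S. \<forall>b\<in>S. a = b" by blast
  then have "card S \<le> Suc 0" using card_le_Suc0_iff_eq[OF assms(1)] by blast
  then show False using assms by simp
qed

lemma det_diag_rank_one:
  fixes s u v :: "'n::finite \<Rightarrow> real"
  shows "det (\<chi> a b. (if a = b then s a else 0) + (\<chi> a b. u a * v b) $ a $ b) =
    (\<Prod>a\<in>UNIV. s a) + (\<Sum>a\<in>UNIV. (\<Prod>b\<in>UNIV - {a}. s b) * (u a * v a))"
proof -
  let ?Y = "(\<chi> a b. u a * v b) :: real^'n^'n"
  let ?f = "\<lambda>S. (\<Prod>a\<in>UNIV - S. s a) * principal_minor ?Y S"
  let ?T = "insert {} ((\<lambda>a. {a}) ` (UNIV::'n set))"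
  have sub: "?T \<subseteq> Pow UNIV" by auto
  have "(\<Sum>S\<in>Pow UNIV. ?f S) = (\<Sum>S\<in>?T. ?f S)"
  proof (rule sum.mono_neutral_right[OF _ sub])
    show "finite (Pow (UNIV::'n set))" by simp
    show "\<forall>S\<in>Pow UNIV - ?T. ?f S = 0"
    proof
      fix S assume S: "S \<in> Pow UNIV - ?T"
      have "card S \<noteq> 0" using S by (simp add: card_eq_0_iff)
      moreover have "card S \<noteq> 1" using S by (auto simp: card_1_singleton_iff)
      ultimately have "2 \<le> card S" by linarith
      then obtain a b where "a \<in> S" "b \<in> S" "a \<noteq> b" using card_ge2_ex[OF finite] by blast
      then have "(\<Sum>p\<in>{p. p permutes S}. (of_int (sign p)::real)) = 0"
        by (intro sign_sum_zero) auto
      then show "?f S = 0" by (simp add: pm_rank_one)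
    qed
  qed
  also have "\<dots> = ?f {} + (\<Sum>S\<in>(\<lambda>a. {a}) ` UNIV. ?f S)"
    by (rule sum.insert) auto
  also have "(\<Sum>S\<in>(\<lambda>a. {a}) ` UNIV. ?f S) = (\<Sum>a\<in>UNIV. ?f {a})"
    by (subst sum.reindex) (simp_all add: inj_on_def)
  finally have "(\<Sum>S\<in>Pow UNIV. ?f S) = ?f {} + (\<Sum>a\<in>UNIV. ?f {a})" .
  then show ?thesis
    unfolding det_diag_plus by (simp only: pm_empty pm_single vec_lambda_beta Diff_empty mult_1_right)
qed


lemma esym_diag:
  assumes "\<forall>a b. a \<noteq> b \<longrightarrow> L $ a $ b = 0"
  shows "esym_minor j L = (\<Sum>T\<in>{T::'n::finite set. card T = j}. \<Prod>c\<in>T. L $ c $ c)"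
  unfolding esym_minor_def using pm_diag[OF assms] by simp

lemma pm_offdiag:
  fixes L :: "real^'n::finite^'n"
  assumes L: "\<forall>a b. a \<noteq> b \<longrightarrow> L $ a $ b = 0" and ab: "a \<noteq> b"
  shows "principal_minor (L + t *\<^sub>R ematrix a b) T = (\<Prod>c\<in>T. L $ c $ c)"
proof -
  let ?M = "L + t *\<^sub>R ematrix a b"
  have M: "\<And>c d. ?M $ c $ d = L $ c $ d + (if c = a \<and> d = b then t else 0)"
    by (simp add: ematrix_def)
  have "principal_minor ?M T = (\<Prod>c\<in>T. ?M $ c $ c)"
  proof (rule pm_id_only)
    fix p assume p: "p permutes T" "p \<noteq> id"
    show "(\<Prod>c\<in>T. ?M $ c $ p c) = 0"
    proof (cases "p a = b")
      case True
      have "p b \<noteq> b"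
      proof
        assume "p b = b"
        then have "p b = p a" using True by simp
        then have "b = a" using permutes_inj[OF p(1)] by (simp add: inj_eq)
        then show False using ab by simp
      qed
      then have "b \<in> T" using p(1) permutes_not_in by metis
      moreover have "?M $ b $ p b = 0" using M L ab \<open>p b \<noteq> b\<close> by simp
      ultimately show ?thesis by (intro prod_zero) (auto intro!: bexI[of _ b])
    next
      case False
      obtain c where c: "p c \<noteq> c" using p(2) by (auto simp: fun_eq_iff)
      then have "c \<in> T" using p(1) permutes_not_in by metis
      moreover have "?M $ c $ p c = 0" using M L c False by auto
      ultimately show ?thesis by (intro prod_zero) (auto intro!: bexI[of _ c])
    qed
  qed
  also have "\<dots> = (\<Prod>c\<in>T. L $ c $ c)" using ab by (intro prod.cong) (auto simp: ematrix_def)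
  finally show ?thesis .
qed

lemma grad_diag:
  fixes L :: "real^'n::finite^'n"
  assumes L: "\<forall>a b. a \<noteq> b \<longrightarrow> L $ a $ b = 0"
  shows "mat_grad (esym_minor j) L =
    (\<chi> a b. if a = b then (\<Sum>T\<in>{T. card T = j \<and> a \<in> T}. \<Prod>c\<in>T - {a}. L $ c $ c) else 0)"
proof -
  have "deriv (\<lambda>t. esym_minor j (L + t *\<^sub>R ematrix a b)) 0 =
    (if a = b then (\<Sum>T\<in>{T. card T = j \<and> a \<in> T}. \<Prod>c\<in>T - {a}. L $ c $ c) else 0)" for a b
  proof (cases "a = b")
    case False
    have "(\<lambda>t. esym_minor j (L + t *\<^sub>R ematrix a b)) = (\<lambda>t. esym_minor j L)"
      unfolding esym_minor_def using pm_offdiag[OF L False] pm_diag[OF L] by simp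
    then show ?thesis using False by simp
  next
    case True
    let ?C = "(\<Sum>T\<in>{T. card T = j \<and> a \<notin> T}. \<Prod>c\<in>T. L $ c $ c) + (\<Sum>T\<in>{T. card T = j \<and> a \<in> T}. L $ a $ a * (\<Prod>c\<in>T - {a}. L $ c $ c))"
    let ?F = "(\<Sum>T\<in>{T. card T = j \<and> a \<in> T}. \<Prod>c\<in>T - {a}. L $ c $ c)"
    have eq: "esym_minor j (L + t *\<^sub>R ematrix a b) = ?C + t * ?F" for t
    proof -
      let ?M = "L + t *\<^sub>R ematrix a b"
      have Md: "\<forall>c d. c \<noteq> d \<longrightarrow> ?M $ c $ d = 0" using L True by (simp add: ematrix_def)
      have Mc: "?M $ c $ c = L $ c $ c + (if c = a then t else 0)" for c
        using True by (simp add: ematrix_def)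
      have "esym_minor j ?M = (\<Sum>T\<in>{T. card T = j}. \<Prod>c\<in>T. ?M $ c $ c)"
        by (rule esym_diag[OF Md])
      also have "\<dots> = (\<Sum>T\<in>{T. card T = j \<and> a \<notin> T}. \<Prod>c\<in>T. ?M $ c $ c) +
          (\<Sum>T\<in>{T. card T = j \<and> a \<in> T}. \<Prod>c\<in>T. ?M $ c $ c)"
        by (subst sum.union_disjoint[symmetric]) (auto intro!: sum.cong)
      also have "(\<Sum>T\<in>{T. card T = j \<and> a \<notin> T}. \<Prod>c\<in>T. ?M $ c $ c) = (\<Sum>T\<in>{T. card T = j \<and> a \<notin> T}. \<Prod>c\<in>T. L $ c $ c)"
        by (intro sum.cong refl prod.cong) (auto simp: ematrix_def True)
      also have "(\<Sum>T\<in>{T. card T = j \<and> a \<in> T}. \<Prod>c\<in>T. ?M $ c $ c) =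
          (\<Sum>T\<in>{T. card T = j \<and> a \<in> T}. (L $ a $ a + t) * (\<Prod>c\<in>T - {a}. L $ c $ c))"
      proof (intro sum.cong refl)
        fix T assume "T \<in> {T. card T = j \<and> a \<in> T}"
        then have aT: "a \<in> T" by simp
        have "(\<Prod>c\<in>T. ?M $ c $ c) = ?M $ a $ a * (\<Prod>c\<in>T - {a}. ?M $ c $ c)"
          using aT by (simp add: prod.remove)
        also have "(\<Prod>c\<in>T - {a}. ?M $ c $ c) = (\<Prod>c\<in>T - {a}. L $ c $ c)"
          by (intro prod.cong) (auto simp: ematrix_def True)
        finally show "(\<Prod>c\<in>T. ?M $ c $ c) = (L $ a $ a + t) * (\<Prod>c\<in>T - {a}. L $ c $ c)"
          by (simp add: ematrix_def True)
      qed
      also have "\<dots> = (\<Sum>T\<in>{T. card T = j \<and> a \<in> T}. L $ a $ a * (\<Prod>c\<in>T - {a}. L $ c $ c)) + t * ?F"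
        by (simp add: algebra_simps sum.distrib sum_distrib_left)
      finally show ?thesis by simp
    qed
    have "((\<lambda>t. ?C + t * ?F) has_real_derivative ?F) (at 0)"
      by (auto intro!: derivative_eq_intros)
    then have "deriv (\<lambda>t. ?C + t * ?F) 0 = ?F" by (rule DERIV_imp_deriv)
    moreover have "(\<lambda>t. esym_minor j (L + t *\<^sub>R ematrix a b)) = (\<lambda>t. ?C + t * ?F)"
      by (rule ext) (rule eq)
    ultimately show ?thesis using True by simp
  qed
  then show ?thesis unfolding mat_grad_def by (simp add: vec_eq_iff)
qed


lemma group_pow:
  fixes g :: "'a \<Rightarrow> real"
  assumes "finite F" "\<forall>x\<in>F. h x \<le> N"
  shows "(\<Sum>x\<in>F. t ^ (h x) * g x) = (\<Sum>m\<le>N. (\<Sum>x\<in>{x\<in>F. h x = m}. g x) * t ^ m)"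
proof -
  have "(\<Sum>m\<le>N. (\<Sum>x\<in>{x\<in>F. h x = m}. g x) * t ^ m) =
        (\<Sum>m\<le>N. \<Sum>x\<in>F. if h x = m then t ^ (h x) * g x else 0)"
  proof (intro sum.cong refl)
    fix m
    have "(\<Sum>x\<in>F. if h x = m then t ^ (h x) * g x else 0) = (\<Sum>x\<in>{x\<in>F. h x = m}. t ^ (h x) * g x)"
      using sum.inter_filter[OF assms(1), of "\<lambda>x. t ^ (h x) * g x" "\<lambda>x. h x = m"] by simp
    also have "\<dots> = (\<Sum>x\<in>{x\<in>F. h x = m}. g x * t ^ m)"
      by (intro sum.cong refl) auto
    finally show "(\<Sum>x\<in>{x\<in>F. h x = m}. g x) * t ^ m = (\<Sum>x\<in>F. if h x = m then t ^ (h x) * g x else 0)"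
      by (simp add: sum_distrib_right)
  qed
  also have "\<dots> = (\<Sum>x\<in>F. \<Sum>m\<le>N. if h x = m then t ^ (h x) * g x else 0)"
    by (rule sum.swap)
  also have "\<dots> = (\<Sum>x\<in>F. t ^ (h x) * g x)"
    using assms(2) by (intro sum.cong refl) (simp add: sum.delta')
  finally show ?thesis by simp
qed

lemma prod_t_plus:
  fixes lam :: "'a \<Rightarrow> real"
  assumes "finite A"
  shows "(\<Prod>b\<in>A. t + lam b) = (\<Sum>T\<in>Pow A. t ^ card (A - T) * (\<Prod>b\<in>T. lam b))"
proof -
  have "(\<Prod>b\<in>A. t + lam b) = (\<Prod>b\<in>A. lam b + t)" by (simp add: add.commute)
  also have "\<dots> = (\<Sum>T\<in>Pow A. (\<Prod>b\<in>T. lam b) * (\<Prod>b\<in>A - T. t))"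
    by (rule prod_add[OF assms])
  finally show ?thesis by (simp add: mult.commute)
qed


lemma matrix_add_rdistrib':
  fixes A B C :: "real^'n::finite^'n"
  shows "(B + C) ** A = B ** A + C ** A"
  by (vector matrix_matrix_mult_def sum.distrib[symmetric] field_simps)

theorem mainTheorem13:
  fixes X Q L :: "real^'n^'n" and k :: nat and i :: 'n
  assumes "1 \<le> k" and "k \<le> CARD('n)"
    and "transpose X = X"
    and "orthogonal_matrix Q"
    and "\<forall>a b. a \<noteq> b \<longrightarrow> L $ a $ b = 0"
    and "X = Q ** L ** transpose Q"
  shows "restr_esym_minor k i X =
           X $ i $ i * esym_minor (k - 1) L
           - column i X \<bullet> ((Q ** mat_grad (esym_minor (k - 1)) L ** transpose Q) *v column i X)"
proof -
  note k1 = assms(1) and kn = assms(2) and Ld = assms(5) and XQ = assms(6)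
  define lam where "lam a = L $ a $ a" for a
  define q where "q a = Q $ i $ a" for a
  define n where "n = CARD('n)"
  have Lent: "L $ a $ b = (if a = b then lam a else 0)" for a b
    using Ld lam_def by auto
  have QtQ: "transpose Q ** Q = mat 1" and QQt: "Q ** transpose Q = mat 1"
    using assms(4) by (auto simp: orthogonal_matrix_def)
  have QtXQ: "transpose Q ** X ** Q = L"
    unfolding XQ by (simp add: matrix_mul_assoc[symmetric] QtQ) (simp add: matrix_mul_assoc QtQ)
  have QtX: "transpose Q ** X = L ** transpose Q"
    unfolding XQ by (simp add: matrix_mul_assoc[symmetric] QtQ) (simp add: matrix_mul_assoc QtQ)
  have sumq: "(\<Sum>a\<in>UNIV. q a * q a) = 1"
  proof -
    have "(Q ** transpose Q) $ i $ i = 1" by (simp add: QQt mat_def)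
    then show ?thesis by (simp add: matrix_matrix_mult_def transpose_def q_def)
  qed
  have QtQent: "(\<Sum>c\<in>UNIV. Q $ c $ a * Q $ c $ b) = (if a = b then 1 else 0)" for a b
  proof -
    have "(transpose Q ** Q) $ a $ b = (if a = b then 1 else 0)" by (simp add: QtQ mat_def)
    then show ?thesis by (simp add: matrix_matrix_mult_def transpose_def)
  qed
  define st where "st t a = (if a = i then 0 else t)" for t :: real and a
  define M where "M t = (\<chi> a b. (if a = b then st t a else 0) + X $ a $ b)" for t
  define c where "c m = (\<Sum>S\<in>{S\<in>{S. i \<in> S}. card (UNIV - S) = m}. principal_minor X S)" for m
  define w where "w a = q a * q a * lam a" for a
  define e where "e a m = (\<Sum>T\<in>{T\<in>Pow (UNIV - {a}). card (UNIV - {a} - T) = m}. \<Prod>b\<in>T. lam b)" for a m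
  have det1: "det (M t) = (\<Sum>m\<le>n. c m * t ^ m)" for t
  proof -
    have "det (M t) = (\<Sum>S\<in>Pow UNIV. (\<Prod>a\<in>UNIV - S. st t a) * principal_minor X S)"
      unfolding M_def by (rule det_diag_plus)
    also have "\<dots> = (\<Sum>S\<in>Pow UNIV. if i \<in> S then t ^ card (UNIV - S) * principal_minor X S else 0)"
    proof (intro sum.cong refl)
      fix S :: "'n set"
      show "(\<Prod>a\<in>UNIV - S. st t a) * principal_minor X S =
         (if i \<in> S then t ^ card (UNIV - S) * principal_minor X S else 0)"
      proof (cases "i \<in> S")
        case True
        then have "(\<Prod>a\<in>UNIV - S. st t a) = (\<Prod>a\<in>UNIV - S. t)"
          by (intro prod.cong) (auto simp: st_def)
        then show ?thesis using True by simp
      next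
        case False
        then have "(\<Prod>a\<in>UNIV - S. st t a) = 0"
          by (intro prod_zero) (auto simp: st_def intro!: bexI[of _ i])
        then show ?thesis using False by simp
      qed
    qed
    also have "\<dots> = (\<Sum>S\<in>{S. i \<in> S}. t ^ card (UNIV - S) * principal_minor X S)"
      by (subst sum.inter_filter[symmetric]) (auto intro!: sum.cong)
    also have "\<dots> = (\<Sum>m\<le>n. c m * t ^ m)"
      unfolding c_def n_def
      by (rule group_pow) (auto simp: card_mono)
    finally show ?thesis .
  qed
  have conj: "transpose Q ** M t ** Q =
     (\<chi> a b. (if a = b then t + lam a else 0) + (\<chi> a b. (- t * q a) * q b) $ a $ b)" for t
  proof -
    have "M t = (\<chi> a b. if a = b then st t a else 0) + X"
      unfolding M_def by (simp add: vec_eq_iff)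
    then have "transpose Q ** M t ** Q = transpose Q ** (\<chi> a b. if a = b then st t a else 0) ** Q + L"
      using QtXQ by (simp add: matrix_add_ldistrib matrix_add_rdistrib')
    also have "transpose Q ** (\<chi> a b. if a = b then st t a else 0) ** Q =
        (\<chi> a b. t * (if a = b then 1 else 0) - t * q a * q b)"
    proof -
      have "(transpose Q ** (\<chi> a b. if a = b then st t a else 0) ** Q) $ a $ b =
         (\<Sum>d\<in>UNIV. Q $ d $ a * st t d * Q $ d $ b)" for a b
        by (simp add: matrix_matrix_mult_def transpose_def if_distrib sum.delta cong: if_cong)
      moreover have "(\<Sum>d\<in>UNIV. Q $ d $ a * st t d * Q $ d $ b) = t * (if a = b then 1 else 0) - t * q a * q b" for a b
      proof -
        have "(\<Sum>d\<in>UNIV. Q $ d $ a * st t d * Q $ d $ b) =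
            (\<Sum>d\<in>UNIV. t * (Q $ d $ a * Q $ d $ b) - (if d = i then t * (Q $ d $ a * Q $ d $ b) else 0))"
          by (intro sum.cong refl) (auto simp: st_def)
        also have "\<dots> = t * (\<Sum>d\<in>UNIV. Q $ d $ a * Q $ d $ b) - t * (Q $ i $ a * Q $ i $ b)"
          by (simp add: sum_subtractf sum_distrib_left)
        finally show ?thesis by (simp add: QtQent q_def)
      qed
      ultimately show ?thesis by (simp add: vec_eq_iff)
    qed
    finally show ?thesis by (simp add: vec_eq_iff Lent)
  qed
  have det2: "det (M t) = (\<Sum>a\<in>UNIV. w a * (\<Prod>b\<in>UNIV - {a}. t + lam b))" for t
  proof -
    have "det (M t) = det (transpose Q ** M t ** Q)"
    proof -
      have "det (transpose Q ** M t ** Q) = det Q * det Q * det (M t)"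
        by (simp add: det_mul)
      moreover have "det Q * det Q = 1"
        using det_orthogonal_matrix[OF assms(4)] by auto
      ultimately show ?thesis by simp
    qed
    also have "\<dots> = (\<Prod>a\<in>UNIV. t + lam a) + (\<Sum>a\<in>UNIV. (\<Prod>b\<in>UNIV - {a}. t + lam b) * (- t * q a * q a))"
      unfolding conj by (rule det_diag_rank_one)
    also have "(\<Prod>a\<in>UNIV. t + lam a) = (\<Sum>a\<in>UNIV. q a * q a * ((t + lam a) * (\<Prod>b\<in>UNIV - {a}. t + lam b)))"
    proof -
      have "(\<Prod>a\<in>UNIV. t + lam a) = (\<Sum>a\<in>UNIV. q a * q a) * (\<Prod>a\<in>UNIV. t + lam a)"
        by (simp add: sumq)
      also have "\<dots> = (\<Sum>a\<in>UNIV. q a * q a * ((t + lam a) * (\<Prod>b\<in>UNIV - {a}. t + lam b)))"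
        unfolding sum_distrib_right
        by (intro sum.cong refl) (metis finite UNIV_I prod.remove)
      finally show ?thesis .
    qed
    finally show ?thesis
      by (simp add: w_def sum.distrib[symmetric] algebra_simps)
  qed
  have det3: "det (M t) = (\<Sum>m\<le>n. (\<Sum>a\<in>UNIV. w a * e a m) * t ^ m)" for t
  proof -
    have "(\<Prod>b\<in>UNIV - {a}. t + lam b) = (\<Sum>m\<le>n. e a m * t ^ m)" for a
    proof -
      have "(\<Prod>b\<in>UNIV - {a}. t + lam b) = (\<Sum>T\<in>Pow (UNIV - {a}). t ^ card (UNIV - {a} - T) * (\<Prod>b\<in>T. lam b))"
        by (rule prod_t_plus) simp
      also have "\<dots> = (\<Sum>m\<le>n. e a m * t ^ m)"
        unfolding e_def n_def by (rule group_pow) (auto simp: card_mono)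
      finally show ?thesis .
    qed
    then have "det (M t) = (\<Sum>a\<in>UNIV. w a * (\<Sum>m\<le>n. e a m * t ^ m))"
      using det2 by simp
    also have "\<dots> = (\<Sum>m\<le>n. (\<Sum>a\<in>UNIV. w a * e a m) * t ^ m)"
      by (simp add: sum_distrib_left sum_distrib_right mult.assoc sum.swap[of _ UNIV])
    finally show ?thesis .
  qed
  have coeff: "c (n - k) = (\<Sum>a\<in>UNIV. w a * e a (n - k))"
  proof -
    have "\<forall>t. (\<Sum>m\<le>n. c m * t ^ m) = (\<Sum>m\<le>n. (\<Sum>a\<in>UNIV. w a * e a m) * t ^ m)"
      using det1 det3 by simp
    then show ?thesis unfolding polyfun_eq_coeffs by simp
  qed
  define E where "E a = (\<Sum>T\<in>{T. card T = k - 1 \<and> a \<notin> T}. \<Prod>b\<in>T. lam b)" for a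
  define F where "F a = (\<Sum>T\<in>{T. card T = k - 1 \<and> a \<in> T}. \<Prod>b\<in>T - {a}. lam b)" for a
  have lhs: "restr_esym_minor k i X = (\<Sum>a\<in>UNIV. w a * E a)"
  proof -
    have cardS: "card (S::'n set) \<le> n" for S unfolding n_def by (simp add: card_mono)
    have "{S\<in>{S. i \<in> S}. card (UNIV - S) = n - k} = {S. card S = k \<and> i \<in> S}"
    proof -
      have "card (UNIV - S) = n - k \<longleftrightarrow> card S = k" for S :: "'n set"
        using cardS[of S] kn by (auto simp: card_Diff_subset n_def)
      then show ?thesis by auto
    qed
    then have "c (n - k) = restr_esym_minor k i X"
      unfolding c_def restr_esym_minor_def by simp
    moreover have "e a (n - k) = E a" for a
    proof -
      have "{T\<in>Pow (UNIV - {a}). card (UNIV - {a} - T) = n - k} = {T. card T = k - 1 \<and> a \<notin> T}"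
      proof -
        have "card (UNIV - {a} - T) = n - k \<longleftrightarrow> card T = k - 1" if "a \<notin> T" for T :: "'n set"
        proof -
          have "UNIV - {a} - T = UNIV - insert a T" by auto
          then have "card (UNIV - {a} - T) = n - card (insert a T)"
            by (simp add: card_Diff_subset n_def)
          moreover have "card (insert a T) = card T + 1" using that by simp
          moreover have "card (insert a T) \<le> n" by (rule cardS)
          ultimately show ?thesis using kn k1 n_def by auto
        qed
        then show ?thesis by auto
      qed
      then show ?thesis unfolding e_def E_def by simp
    qed
    ultimately show ?thesis using coeff by simp
  qed
  have esymE: "esym_minor (k - 1) L = E a + lam a * F a" for a
  proof -
    have "esym_minor (k - 1) L = (\<Sum>T\<in>{T. card T = k - 1}. \<Prod>b\<in>T. lam b)"
      unfolding lam_def by (rule esym_diag[OF Ld])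
    also have "\<dots> = (\<Sum>T\<in>{T. card T = k - 1 \<and> a \<notin> T}. \<Prod>b\<in>T. lam b) +
          (\<Sum>T\<in>{T. card T = k - 1 \<and> a \<in> T}. \<Prod>b\<in>T. lam b)"
      by (subst sum.union_disjoint[symmetric]) (auto intro!: sum.cong)
    also have "(\<Sum>T\<in>{T. card T = k - 1 \<and> a \<in> T}. \<Prod>b\<in>T. lam b) =
        (\<Sum>T\<in>{T. card T = k - 1 \<and> a \<in> T}. lam a * (\<Prod>b\<in>T - {a}. lam b))"
      by (intro sum.cong refl) (auto simp: prod.remove)
    finally show ?thesis unfolding E_def F_def by (simp add: sum_distrib_left)
  qed
  have Xii: "X $ i $ i = (\<Sum>a\<in>UNIV. q a * q a * lam a)"
    unfolding XQ by (simp add: matrix_matrix_mult_def transpose_def Lent q_def if_distrib if_distribR sum.delta' cong: if_cong) (simp add: algebra_simps)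
  have quad: "column i X \<bullet> ((Q ** mat_grad (esym_minor (k - 1)) L ** transpose Q) *v column i X)
     = (\<Sum>a\<in>UNIV. (lam a * q a) * F a * (lam a * q a))"
  proof -
    let ?G = "mat_grad (esym_minor (k - 1)) L"
    let ?v = "column i X"
    have G: "?G = (\<chi> a b. if a = b then F a else 0)"
      unfolding F_def lam_def by (rule grad_diag[OF Ld])
    have u: "?v v* Q = (\<chi> a. lam a * q a)"
    proof -
      have "?v v* Q = (\<chi> a. (transpose Q ** X) $ a $ i)"
        by (simp add: vector_matrix_mult_def matrix_matrix_mult_def transpose_def column_def mult.commute)
      also have "\<dots> = (\<chi> a. lam a * q a)"
        unfolding QtX by (simp add: matrix_matrix_mult_def transpose_def Lent q_def if_distrib if_distribR sum.delta' cong: if_cong)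
      finally show ?thesis .
    qed
    have "?v \<bullet> ((Q ** ?G ** transpose Q) *v ?v) = ?v \<bullet> (Q *v (?G *v (transpose Q *v ?v)))"
      by (simp only: matrix_vector_mul_assoc matrix_mul_assoc)
    also have "\<dots> = (?v v* Q) \<bullet> (?G *v (?v v* Q))"
      by (simp add: dot_lmul_matrix)
    also have "\<dots> = (\<Sum>a\<in>UNIV. (lam a * q a) * F a * (lam a * q a))"
      unfolding u G by (simp add: inner_vec_def matrix_vector_mult_def if_distrib if_distribR sum.delta' cong: if_cong) (simp add: algebra_simps)
    finally show ?thesis .
  qed
  have "X $ i $ i * esym_minor (k - 1) L = (\<Sum>a\<in>UNIV. q a * q a * lam a * (E a + lam a * F a))"
    unfolding Xii sum_distrib_right using esymE by simp
  then show ?thesis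
    unfolding lhs quad w_def by (simp add: sum_subtractf[symmetric] algebra_simps)
qed

end
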